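(* Let $P$ be a locally finite poset, $R$ a commutative unital ring, and $n\ge 3$. Let $\mathbf{x}=(x_1,\mathbf{u})$ and $\mathbf{y}=(\mathbf{v},y_n)$ be elements of $P^n_\le$, where $x_1,y_n\in P$ and $\mathbf{u},\mathbf{v}\in P^{n-1}_\le$. Then in $I^n(P,R)$, $$e_{\mathbf{x}}e_{\mathbf{y}}=\begin{cases}\sum_{\mathbf{z}\in\mathcal{I}(\mathbf{u})} e_{(x_1,\mathbf{z},y_n)}, & \mathbf{u}=\mathbf{v},\\ 0,& \mathbf{u}\ne\mathbf{v}.\end{cases}$$
   Context: For a poset $P$ and $n\ge 2$, $P^n_\le=\{(x_1,\dots,x_n)\in P^n: x_1\le\dots\le x_n\}$. For $\mathbf{x}=(x_1,\dots,x_n)\in P^n_\le$, $\mathcal{I}(\mathbf{x})=[x_1,x_2]\times\dots\times[x_{n-1},x_n]\subseteq P^{n-1}_\le$, where $[a,b]=\{c\in P: a\le c\le b\}$. The $n$-th partial flag incidence algebra $I^n(P,R)$ is the $R$-module of functions $f:P^n_\le\to R$ with multiplication $(fg)(\mathbf{x})=\sum_{\mathbf{y}\in\mathcal{I}(\mathbf{x})}f(x_1,\mathbf{y})g(\mathbf{y},x_n)$. For $\mathbf{x}\in P^n_\le$, $e_{\mathbf{x}}\in I^n(P,R)$ is the function equal to $1$ at $\mathbf{x}$ and $0$ elsewhere. *)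

theory Defs
  imports Main
begin

text \<open>Tuples in \<open>P^n\<close> are represented as lists of length n over a type \<open>'a :: order\<close>
  (the poset P). Functions \<open>P^n_\<le> \<rightarrow> R\<close> are represented as functions on lists
  that are zero off \<open>P^n_\<le>\<close>.\<close>

definition chains :: "nat \<Rightarrow> ('a::order) list set" where
  "chains n = {xs. length xs = n \<and> (\<forall>i. Suc i < length xs \<longrightarrow> xs ! i \<le> xs ! Suc i)}"

definition intv_prod :: "('a::order) list \<Rightarrow> 'a list set" where
  "intv_prod xs = {ys. length ys = length xs - 1 \<and>
      (\<forall>i < length ys. xs ! i \<le> ys ! i \<and> ys ! i \<le> xs ! Suc i)}"

definition locally_finite_order :: "('a::order) itself \<Rightarrow> bool" where
  "locally_finite_order _ \<longleftrightarrow> (\<forall>a b::'a. finite {a..b})"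

definition pfi_mult :: "nat \<Rightarrow> (('a::order) list \<Rightarrow> 'r::comm_ring_1) \<Rightarrow> ('a list \<Rightarrow> 'r)
    \<Rightarrow> ('a list \<Rightarrow> 'r)" where
  "pfi_mult n f g = (\<lambda>x. if x \<in> chains n
      then (\<Sum>y\<in>intv_prod x. f (hd x # y) * g (y @ [last x])) else 0)"

definition pfi_e :: "('a::order) list \<Rightarrow> ('a list \<Rightarrow> 'r::comm_ring_1)" where
  "pfi_e x = (\<lambda>w. if w = x then 1 else 0)"

end

theory Submission
  imports Defs
begin

lemma fin_intv:
  assumes "locally_finite_order TYPE('a::order)"
  shows "finite (intv_prod (w::'a list))"
proof -
  define S where "S = (\<Union>i<length w. {w!i..w!Suc i})"
  have fS: "finite S" unfolding S_def using assms by (auto simp: locally_finite_order_def)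
  have "intv_prod w \<subseteq> {ys. set ys \<subseteq> S \<and> length ys = length w - 1}"
  proof
    fix ys assume ys: "ys \<in> intv_prod w"
    have "set ys \<subseteq> S"
    proof
      fix y assume "y \<in> set ys"
      then obtain i where i: "i < length ys" "ys ! i = y" by (auto simp: in_set_conv_nth)
      with ys show "y \<in> S" unfolding S_def intv_prod_def by force
    qed
    with ys show "ys \<in> {ys. set ys \<subseteq> S \<and> length ys = length w - 1}"
      by (auto simp: intv_prod_def)
  qed
  moreover have "finite {ys. set ys \<subseteq> S \<and> length ys = length w - 1}"
    using finite_lists_length_eq[OF fS] .
  ultimately show ?thesis by (rule finite_subset)
qed

lemma key:
  fixes x1 yn :: "'a::order" and u :: "'a list"
  assumes n3: "n \<ge> 3"
    and c1: "x1 # u \<in> chains n"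
    and c2: "u @ [yn] \<in> chains n"
  shows "(w \<in> chains n \<and> hd w = x1 \<and> last w = yn \<and> u \<in> intv_prod w) \<longleftrightarrow>
         (\<exists>z\<in>intv_prod u. w = x1 # z @ [yn])"
proof -
  have lu: "length u = n - 1" using c1 by (auto simp: chains_def)
  have ch1: "\<And>i. Suc i < n \<Longrightarrow> (x1#u) ! i \<le> (x1#u) ! Suc i" using c1 by (auto simp: chains_def)
  have ch2: "\<And>i. Suc i < n \<Longrightarrow> (u@[yn]) ! i \<le> (u@[yn]) ! Suc i" using c2 by (auto simp: chains_def)
  have x1u0: "x1 \<le> u ! 0" using ch1[of 0] n3 by simp
  have uyn: "u ! (n-2) \<le> yn"
  proof -
    have l1: "n - 2 < length u" using n3 lu by arith
    have l2: "Suc (n - 2) = length u" using n3 lu by arith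
    have a: "(u@[yn]) ! (n-2) = u ! (n-2)" using l1 by (simp add: nth_append)
    have b: "(u@[yn]) ! Suc (n-2) = yn" using l2 by (simp only: nth_append_length)
    show ?thesis using ch2[of "n-2"] n3 a b by simp
  qed
  show ?thesis
  proof
    assume H: "w \<in> chains n \<and> hd w = x1 \<and> last w = yn \<and> u \<in> intv_prod w"
    have lw: "length w = n" using H by (auto simp: chains_def)
    have wne: "w \<noteq> []" using lw n3 by auto
    have tne: "tl w \<noteq> []" using lw n3 by (cases w) auto
    define z where "z = butlast (tl w)"
    have wz: "w = x1 # z @ [yn]"
    proof -
      have "w = hd w # tl w" using wne by simp
      also have "tl w = butlast (tl w) @ [last (tl w)]" using tne by simp
      also have "last (tl w) = last w" using tne wne by (cases w) auto
      finally show ?thesis using H z_def by simp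
    qed
    have lz: "length z = n - 2" using lw wz by simp
    have iw: "\<And>i. i < n - 1 \<Longrightarrow> w ! i \<le> u ! i \<and> u ! i \<le> w ! Suc i"
      using H lu by (auto simp: intv_prod_def)
    have "z \<in> intv_prod u"
      unfolding intv_prod_def
    proof (intro CollectI conjI allI impI)
      show "length z = length u - 1" using lz lu by simp
    next
      fix i assume i: "i < length z"
      have "u ! i \<le> w ! Suc i" using iw[of i] i lz by simp
      moreover have "w ! Suc i = z ! i" using wz i by (simp add: nth_append)
      ultimately show "u ! i \<le> z ! i" by simp
    next
      fix i assume i: "i < length z"
      have "w ! Suc i \<le> u ! Suc i" using iw[of "Suc i"] i lz by simp
      moreover have "w ! Suc i = z ! i" using wz i by (simp add: nth_append)
      ultimately show "z ! i \<le> u ! Suc i" by simp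
    qed
    with wz show "\<exists>z\<in>intv_prod u. w = x1 # z @ [yn]" by blast
  next
    assume "\<exists>z\<in>intv_prod u. w = x1 # z @ [yn]"
    then obtain z where z: "z \<in> intv_prod u" and wz: "w = x1 # z @ [yn]" by blast
    have lz: "length z = n - 2" using z lu by (auto simp: intv_prod_def)
    have iz: "\<And>i. i < n - 2 \<Longrightarrow> u ! i \<le> z ! i \<and> z ! i \<le> u ! Suc i"
      using z lz by (auto simp: intv_prod_def)
    have w0: "w ! 0 = x1" using wz by simp
    have wS: "\<And>j. j \<le> n - 2 \<Longrightarrow> w ! Suc j = (if j < n - 2 then z ! j else yn)"
      using wz lz by (auto simp: nth_append)
    have chain: "w \<in> chains n"
      unfolding chains_def
    proof (intro CollectI conjI allI impI)
      show "length w = n" using wz lz n3 by simp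
    next
      fix i assume i: "Suc i < length w"
      hence i': "Suc i < n" using wz lz n3 by simp
      show "w ! i \<le> w ! Suc i"
      proof (cases i)
        case 0
        then show ?thesis using w0 wS[of 0] x1u0 iz[of 0] n3 by (auto intro: order_trans)
      next
        case (Suc j)
        have jl: "j < n - 2" using Suc i' by arith
        have a: "w ! i = z ! j" using wS[of j] Suc jl by simp
        show ?thesis
        proof (cases "Suc j < n - 2")
          case True
          then show ?thesis using a Suc wS[of "Suc j"] iz[of j] iz[of "Suc j"]
            by (auto intro: order_trans)
        next
          case False
          then have "Suc j = n - 2" using i' Suc by simp
          then show ?thesis using a Suc wS[of "Suc j"] iz[of j] uyn
            by (auto intro: order_trans)
        qed
      qed
    qed
    have "u \<in> intv_prod w"
      unfolding intv_prod_def
    proof (intro CollectI conjI allI impI)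
      show "length u = length w - 1" using wz lz lu n3 by simp
    next
      fix i assume i: "i < length u"
      show "w ! i \<le> u ! i"
      proof (cases i)
        case 0 then show ?thesis using w0 x1u0 by simp
      next
        case (Suc j)
        have jl: "j < n - 2" using Suc i lu by arith
        then show ?thesis using Suc wS[of j] iz[of j] by simp
      qed
    next
      fix i assume i: "i < length u"
      show "u ! i \<le> w ! Suc i"
      proof (cases "i < n - 2")
        case True then show ?thesis using wS[of i] iz[of i] by simp
      next
        case False then have "i = n - 2" using i lu by simp
        then show ?thesis using wS[of i] uyn by simp
      qed
    qed
    moreover have "hd w = x1" "last w = yn" using wz by auto
    ultimately show "w \<in> chains n \<and> hd w = x1 \<and> last w = yn \<and> u \<in> intv_prod w"
      using chain by simp
  qed
qed

theorem proposition1p2: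
  fixes x1 yn :: "'a::order" and u v :: "'a list" and n :: nat
  assumes "locally_finite_order TYPE('a)"
    and "n \<ge> 3"
    and "x1 # u \<in> chains n"
    and "v @ [yn] \<in> chains n"
  shows "pfi_mult n (pfi_e (x1 # u) :: 'a list \<Rightarrow> 'r::comm_ring_1) (pfi_e (v @ [yn])) =
    (if u = v then (\<lambda>w. \<Sum>z\<in>intv_prod u. pfi_e (x1 # z @ [yn]) w) else (\<lambda>w. 0))"
proof
  fix w :: "'a list"
  have fw: "finite (intv_prod w)" by (rule fin_intv[OF assms(1)])
  have L: "pfi_mult n (pfi_e (x1 # u) :: 'a list \<Rightarrow> 'r) (pfi_e (v @ [yn])) w =
     (if w \<in> chains n \<and> hd w = x1 \<and> last w = yn \<and> u = v \<and> u \<in> intv_prod w then 1 else 0)"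
  proof -
    have "\<And>y. (pfi_e (x1 # u) (hd w # y) :: 'r) * pfi_e (v @ [yn]) (y @ [last w]) =
       (if y = u then (if hd w = x1 \<and> last w = yn \<and> u = v then 1 else 0) else 0)"
      by (auto simp: pfi_e_def)
    then have "(\<Sum>y\<in>intv_prod w. (pfi_e (x1 # u) (hd w # y) :: 'r) * pfi_e (v @ [yn]) (y @ [last w]))
       = (if u \<in> intv_prod w then (if hd w = x1 \<and> last w = yn \<and> u = v then 1 else 0) else 0)"
      using fw by (simp add: sum.delta')
    then show ?thesis unfolding pfi_mult_def by auto
  qed
  show "pfi_mult n (pfi_e (x1 # u) :: 'a list \<Rightarrow> 'r) (pfi_e (v @ [yn])) w =
    (if u = v then (\<lambda>w. \<Sum>z\<in>intv_prod u. pfi_e (x1 # z @ [yn]) w) else (\<lambda>w. 0)) w"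
  proof (cases "u = v")
    case False then show ?thesis using L by simp
  next
    case True
    have fu: "finite (intv_prod u)" by (rule fin_intv[OF assms(1)])
    have "\<And>z. (pfi_e (x1 # z @ [yn]) w :: 'r) =
       (if z = butlast (tl w) then (if w = x1 # butlast (tl w) @ [yn] then 1 else 0) else 0)"
      by (auto simp: pfi_e_def)
    then have R: "(\<Sum>z\<in>intv_prod u. (pfi_e (x1 # z @ [yn]) w :: 'r)) =
       (if butlast (tl w) \<in> intv_prod u \<and> w = x1 # butlast (tl w) @ [yn] then 1 else 0)"
      using fu by (simp add: sum.delta')
    have E: "(\<exists>z\<in>intv_prod u. w = x1 # z @ [yn]) \<longleftrightarrow>
       (butlast (tl w) \<in> intv_prod u \<and> w = x1 # butlast (tl w) @ [yn])" by auto
    have K: "(w \<in> chains n \<and> hd w = x1 \<and> last w = yn \<and> u \<in> intv_prod w) \<longleftrightarrow>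
         (\<exists>z\<in>intv_prod u. w = x1 # z @ [yn])"
      using key[OF assms(2) assms(3)] assms(4) True by blast
    show ?thesis using L R E K True by simp
  qed
qed

end
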